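(* Let $L=\langle S,A,\to\rangle$ be a labelled transition system and $x,y\in\{o,b\}$. Then $\mathrel{\underline{\leftrightarrow}}^{ed}_{(x,y)}$ has the stuttering property: whenever $t_0\xrightarrow{\tau}t_1\xrightarrow{\tau}\cdots\xrightarrow{\tau}t_k$ with $t_0\mathrel{\underline{\leftrightarrow}}^{ed}_{(x,y)}t_k$, then $t_i\mathrel{\underline{\leftrightarrow}}^{ed}_{(x,y)}t_j$ for all $0\le i,j\le k$.
   Context: An LTS is $\langle S,A,\to\rangle$ with states $S$, actions $A$ containing the internal action $\tau$, and $\to\subseteq S\times A\times S$; write $s\xrightarrow{a}t$, $\twoheadrightarrow$ for the reflexive-transitive and $\twoheadrightarrow^+$ for the transitive closure of $\xrightarrow{\tau}$. For $R\subseteq S\times S$ and $s,s',t$: $s\twoheadrightarrow_{o,R,t}s'$ iff $s\twoheadrightarrow s'$; $s\twoheadrightarrow_{b,R,t}s'$ iff $s\twoheadrightarrow s'$, $t\,R\,s$ and $t\,R\,s'$. For $x,y\in\{o,b\}$, a symmetric $R$ is an $(x,y)$-generic bisimulation if whenever $s\,R\,t$ and $s\xrightarrow{a}s'$, either $a=\tau$ and $s'\,R\,t$, or there exist $t',t_1,t_2$ with $t\twoheadrightarrow_{x,R,s}t_1\xrightarrow{a}t_2\twoheadrightarrow_{y,R,s'}t'$ and $s'\,R\,t'$. $R$ is an $(x,y)$-generic bisimulation with explicit divergence if it is an $(x,y)$-generic bisimulation and for all $s\,R\,t$, if there is an infinite sequence $s=s_0\xrightarrow{\tau}s_1\xrightarrow{\tau}s_2\cdots$,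 then there exist $t'$ with $t\twoheadrightarrow^+t'$ and some $k$ with $s_k\,R\,t'$. $s\mathrel{\underline{\leftrightarrow}}^{ed}_{(x,y)}t$ iff some such relation relates $s$ and $t$. *)

theory Defs
  imports Main
begin

text \<open>A labelled transition system is given by a transition relation
  lts s a t (meaning s --a--> t) over a state type 's and an action type 'a,
  together with a distinguished internal action tau.\<close>

datatype mode = Mo | Mb

definition tau_step :: "('s \<Rightarrow> 'a \<Rightarrow> 's \<Rightarrow> bool) \<Rightarrow> 'a \<Rightarrow> 's \<Rightarrow> 's \<Rightarrow> bool" where
  "tau_step lts tau s t \<longleftrightarrow> lts s tau t"

definition tau_star :: "('s \<Rightarrow> 'a \<Rightarrow> 's \<Rightarrow> bool) \<Rightarrow> 'a \<Rightarrow> 's \<Rightarrow> 's \<Rightarrow> bool" where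
  "tau_star lts tau = (tau_step lts tau)\<^sup>*\<^sup>*"

definition tau_plus :: "('s \<Rightarrow> 'a \<Rightarrow> 's \<Rightarrow> bool) \<Rightarrow> 'a \<Rightarrow> 's \<Rightarrow> 's \<Rightarrow> bool" where
  "tau_plus lts tau = (tau_step lts tau)\<^sup>+\<^sup>+"

definition mode_star ::
  "('s \<Rightarrow> 'a \<Rightarrow> 's \<Rightarrow> bool) \<Rightarrow> 'a \<Rightarrow> mode \<Rightarrow> ('s \<Rightarrow> 's \<Rightarrow> bool) \<Rightarrow> 's \<Rightarrow> 's \<Rightarrow> 's \<Rightarrow> bool" where
  "mode_star lts tau x R t s s' \<longleftrightarrow>
     (case x of
        Mo \<Rightarrow> tau_star lts tau s s'
      | Mb \<Rightarrow> tau_star lts tau s s' \<and> R t s \<and> R t s')"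

definition generic_bisim ::
  "('s \<Rightarrow> 'a \<Rightarrow> 's \<Rightarrow> bool) \<Rightarrow> 'a \<Rightarrow> mode \<Rightarrow> mode \<Rightarrow> ('s \<Rightarrow> 's \<Rightarrow> bool) \<Rightarrow> bool" where
  "generic_bisim lts tau x y R \<longleftrightarrow>
     symp R \<and>
     (\<forall>s t a s'. R s t \<and> lts s a s' \<longrightarrow>
        (a = tau \<and> R s' t) \<or>
        (\<exists>t' t1 t2. mode_star lts tau x R s t t1 \<and> lts t1 a t2 \<and>
                    mode_star lts tau y R s' t2 t' \<and> R s' t'))"

definition generic_bisim_ed ::
  "('s \<Rightarrow> 'a \<Rightarrow> 's \<Rightarrow> bool) \<Rightarrow> 'a \<Rightarrow> mode \<Rightarrow> mode \<Rightarrow> ('s \<Rightarrow> 's \<Rightarrow> bool) \<Rightarrow> bool" where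
  "generic_bisim_ed lts tau x y R \<longleftrightarrow>
     generic_bisim lts tau x y R \<and>
     (\<forall>s t. R s t \<longrightarrow>
        (\<forall>f :: nat \<Rightarrow> 's. f 0 = s \<and> (\<forall>i. lts (f i) tau (f (Suc i))) \<longrightarrow>
           (\<exists>t' k. tau_plus lts tau t t' \<and> R (f k) t')))"

definition bisimilar_ed ::
  "('s \<Rightarrow> 'a \<Rightarrow> 's \<Rightarrow> bool) \<Rightarrow> 'a \<Rightarrow> mode \<Rightarrow> mode \<Rightarrow> 's \<Rightarrow> 's \<Rightarrow> bool" where
  "bisimilar_ed lts tau x y s t \<longleftrightarrow>
     (\<exists>R. generic_bisim_ed lts tau x y R \<and> R s t)"

end

theory Submission
  imports Defs
begin

definition div_ok :: "('s \<Rightarrow> 'a \<Rightarrow> 's \<Rightarrow> bool) \<Rightarrow> 'a \<Rightarrow> ('s \<Rightarrow> 's \<Rightarrow> bool) \<Rightarrow> bool" where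
  "div_ok lts tau R \<longleftrightarrow> (\<forall>s t. R s t \<longrightarrow>
        (\<forall>f :: nat \<Rightarrow> 's. f 0 = s \<and> (\<forall>i. lts (f i) tau (f (Suc i))) \<longrightarrow>
           (\<exists>t' k. tau_plus lts tau t t' \<and> R (f k) t')))"

definition mtch :: "('s \<Rightarrow> 'a \<Rightarrow> 's \<Rightarrow> bool) \<Rightarrow> 'a \<Rightarrow> mode \<Rightarrow> mode \<Rightarrow> ('s \<Rightarrow> 's \<Rightarrow> bool) \<Rightarrow> 's \<Rightarrow> 's \<Rightarrow> 'a \<Rightarrow> 's \<Rightarrow> bool" where
  "mtch lts tau x y R s t a s' \<longleftrightarrow>
        (a = tau \<and> (\<exists>t'. mode_star lts tau x R s t t' \<and> R s' t')) \<or>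
        (\<exists>t' t1 t2. mode_star lts tau x R s t t1 \<and> lts t1 a t2 \<and>
                    mode_star lts tau y R s' t2 t' \<and> R s' t')"

definition semi :: "('s \<Rightarrow> 'a \<Rightarrow> 's \<Rightarrow> bool) \<Rightarrow> 'a \<Rightarrow> mode \<Rightarrow> mode \<Rightarrow> ('s \<Rightarrow> 's \<Rightarrow> bool) \<Rightarrow> bool" where
  "semi lts tau x y R \<longleftrightarrow> symp R \<and>
     (\<forall>s t a s'. R s t \<and> lts s a s' \<longrightarrow> mtch lts tau x y R s t a s') \<and> div_ok lts tau R"

definition DD where "DD lts tau x y s t \<longleftrightarrow> (\<exists>R. semi lts tau x y R \<and> R s t)"

definition G2 where "G2 lts tau x y s t \<longleftrightarrow> (\<exists>u v. tau_star lts tau u s \<and> tau_star lts tau s v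
   \<and> DD lts tau x y u t \<and> DD lts tau x y v t)"

definition RR where "RR lts tau x y s t \<longleftrightarrow> DD lts tau x y s t \<or> G2 lts tau x y s t \<or> G2 lts tau x y t s"

lemma mode_star_tau: "mode_star lts tau x R t s s' \<Longrightarrow> tau_star lts tau s s'"
  by (cases x) (auto simp: mode_star_def)

lemma mode_star_mono: "mode_star lts tau x R t s s' \<Longrightarrow> (\<And>a b. R a b \<Longrightarrow> R' a b) \<Longrightarrow> mode_star lts tau x R' t s s'"
  by (cases x) (auto simp: mode_star_def)

lemma mode_star_prefix:
  assumes "mode_star lts tau x R s t t1" "tau_star lts tau q t" "R' s q" "\<And>a b. R a b \<Longrightarrow> R' a b"
  shows "mode_star lts tau x R' s q t1"
  using assms by (cases x) (auto simp: mode_star_def tau_star_def)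

lemma mtch_prefix:
  assumes "mtch lts tau x y R s z a s'" "tau_star lts tau t z" "R' s t" "\<And>a b. R a b \<Longrightarrow> R' a b"
  shows "mtch lts tau x y R' s t a s'"
  using assms(1) unfolding mtch_def
proof (elim disjE exE conjE)
  fix t' assume "a = tau" "mode_star lts tau x R s z t'" "R s' t'"
  then show "(a = tau \<and> (\<exists>t'. mode_star lts tau x R' s t t' \<and> R' s' t')) \<or>
        (\<exists>t' t1 t2. mode_star lts tau x R' s t t1 \<and> lts t1 a t2 \<and>
                    mode_star lts tau y R' s' t2 t' \<and> R' s' t')"
    using mode_star_prefix[of lts tau x R s z t' t R', OF _ assms(2,3,4)] assms(4) by blast
next
  fix t' t1 t2 assume "mode_star lts tau x R s z t1" "lts t1 a t2" "mode_star lts tau y R s' t2 t'" "R s' t'"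
  then show "(a = tau \<and> (\<exists>t'. mode_star lts tau x R' s t t' \<and> R' s' t')) \<or>
        (\<exists>t' t1 t2. mode_star lts tau x R' s t t1 \<and> lts t1 a t2 \<and>
                    mode_star lts tau y R' s' t2 t' \<and> R' s' t')"
    using mode_star_prefix[of lts tau x R s z t1 t R', OF _ assms(2,3,4)] mode_star_mono[of lts tau y R s' t2 t' R'] assms(4) by blast
qed

lemma mtch_mono:
  assumes "mtch lts tau x y R s t a s'" "R s t" "\<And>a b. R a b \<Longrightarrow> R' a b"
  shows "mtch lts tau x y R' s t a s'"
  using mtch_prefix[OF assms(1) _ _ assms(3)] assms(2,3) by (simp add: tau_star_def)

lemma semi_sym: "semi lts tau x y R \<Longrightarrow> R s t \<Longrightarrow> R t s"
  unfolding semi_def by (blast dest: sympD)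

lemma semi_div: assumes "semi lts tau x y R" "R s t" "f 0 = s" "\<forall>i. lts (f i) tau (f (Suc i))"
  shows "\<exists>t' k. tau_plus lts tau t t' \<and> R (f k) t'"
proof -
  have "div_ok lts tau R" using assms(1) unfolding semi_def by simp
  then show ?thesis using assms(2-4) unfolding div_ok_def by blast
qed

lemma semi_moves: assumes "semi lts tau x y R" "R s t" "lts s a s'"
  shows "mtch lts tau x y R s t a s'"
proof -
  have "\<forall>s t a s'. R s t \<and> lts s a s' \<longrightarrow> mtch lts tau x y R s t a s'"
    using assms(1) unfolding semi_def by simp
  then show ?thesis using assms(2,3) by simp
qed

lemma semiI:
  assumes "\<And>s t. R s t \<Longrightarrow> R t s"
    and "\<And>s t a s'. R s t \<Longrightarrow> lts s a s' \<Longrightarrow> mtch lts tau x y R s t a s'"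
    and "\<And>s t f. R s t \<Longrightarrow> f 0 = s \<Longrightarrow> \<forall>i. lts (f i) tau (f (Suc i)) \<Longrightarrow> \<exists>t' k. tau_plus lts tau t t' \<and> R (f k) t'"
  shows "semi lts tau x y R"
  unfolding semi_def div_ok_def
  using assms by (auto intro: sympI)

lemma DD_I: "semi lts tau x y R \<Longrightarrow> R s t \<Longrightarrow> DD lts tau x y s t"
  unfolding DD_def by blast

lemma DD_E: "DD lts tau x y s t \<Longrightarrow> (\<And>R. semi lts tau x y R \<Longrightarrow> R s t \<Longrightarrow> P) \<Longrightarrow> P"
  unfolding DD_def by blast

lemma semi_DD: "semi lts tau x y (DD lts tau x y)"
proof (rule semiI)
  fix s t assume "DD lts tau x y s t"
  then show "DD lts tau x y t s" by (elim DD_E) (rule DD_I, assumption, erule (1) semi_sym)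
next
  fix s t a s' assume d: "DD lts tau x y s t" and l: "lts s a s'"
  from d obtain R where R: "semi lts tau x y R" "R s t" by (rule DD_E)
  have "mtch lts tau x y R s t a s'" by (rule semi_moves[OF R l])
  then show "mtch lts tau x y (DD lts tau x y) s t a s'"
    by (rule mtch_mono) (use R in \<open>auto intro: DD_I\<close>)
next
  fix s t and f :: "nat \<Rightarrow> _" assume d: "DD lts tau x y s t" and f: "f 0 = s" "\<forall>i. lts (f i) tau (f (Suc i))"
  from d obtain R where R: "semi lts tau x y R" "R s t" by (rule DD_E)
  obtain t' k where "tau_plus lts tau t t'" "R (f k) t'" using semi_div[OF R f] by blast
  then show "\<exists>t' k. tau_plus lts tau t t' \<and> DD lts tau x y (f k) t'" using DD_I[OF R(1)] by blast
qed

lemma DD_sym: "DD lts tau x y s t \<Longrightarrow> DD lts tau x y t s"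
  by (rule semi_sym[OF semi_DD])

lemma DD_refl: "DD lts tau x y s s"
proof -
  have "semi lts tau x y (=)"
  proof (rule semiI)
    fix s t a s' assume h: "s = t" "lts s a s'"
    have m1: "mode_star lts tau x (=) s t s" using h by (cases x) (auto simp: mode_star_def tau_star_def)
    have m2: "mode_star lts tau y (=) s' s' s'" by (cases y) (auto simp: mode_star_def tau_star_def)
    show "mtch lts tau x y (=) s t a s'" unfolding mtch_def
      apply (rule disjI2, rule exI[of _ s'], rule exI[of _ s], rule exI[of _ s'])
      using h m1 m2 by auto
  next
    fix s t and f :: "nat \<Rightarrow> _" assume h: "s = t" "f 0 = s" "\<forall>i. lts (f i) tau (f (Suc i))"
    then have "tau_plus lts tau t (f 1)" unfolding tau_plus_def tau_step_def
      by (metis One_nat_def tranclp.r_into_trancl)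
    then show "\<exists>t' k. tau_plus lts tau t t' \<and> f k = t'" by blast
  qed simp
  then show ?thesis by (rule DD_I) simp
qed

lemma transfer:
  assumes "tau_star lts tau u p" "DD lts tau x y u q"
  shows "\<exists>z. tau_star lts tau q z \<and> DD lts tau x y p z"
  using assms(1) unfolding tau_star_def
proof (induction rule: rtranclp_induct)
  case base then show ?case using assms(2) by (auto simp: tau_star_def)
next
  case (step p0 p)
  then obtain z0 where z0: "(tau_step lts tau)\<^sup>*\<^sup>* q z0" "DD lts tau x y p0 z0" by (auto simp: tau_star_def)
  have l: "lts p0 tau p" using step(2) by (simp add: tau_step_def)
  have "mtch lts tau x y (DD lts tau x y) p0 z0 tau p" by (rule semi_moves[OF semi_DD z0(2) l])
  then show ?case unfolding mtch_def
  proof (elim disjE exE conjE)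
    fix t' assume ms: "mode_star lts tau x (DD lts tau x y) p0 z0 t'" and d: "DD lts tau x y p t'"
    have "(tau_step lts tau)\<^sup>*\<^sup>* z0 t'" using mode_star_tau[OF ms] by (simp add: tau_star_def)
    then have "(tau_step lts tau)\<^sup>*\<^sup>* q t'" using z0(1) by (rule rtranclp_trans[rotated])
    then show ?case using d by blast
  next
    fix t' t1 t2 assume m1: "mode_star lts tau x (DD lts tau x y) p0 z0 t1" and l1: "lts t1 tau t2"
      and m2: "mode_star lts tau y (DD lts tau x y) p t2 t'" and d: "DD lts tau x y p t'"
    have a1: "(tau_step lts tau)\<^sup>*\<^sup>* z0 t1" using mode_star_tau[OF m1] by (simp add: tau_star_def)
    have a2: "(tau_step lts tau)\<^sup>*\<^sup>* t2 t'" using mode_star_tau[OF m2] by (simp add: tau_star_def)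
    have a3: "tau_step lts tau t1 t2" using l1 by (simp add: tau_step_def)
    have "(tau_step lts tau)\<^sup>*\<^sup>* t1 t'" using a3 a2 by (rule converse_rtranclp_into_rtranclp)
    then have "(tau_step lts tau)\<^sup>*\<^sup>* z0 t'" using a1 by (rule rtranclp_trans[rotated])
    then have "(tau_step lts tau)\<^sup>*\<^sup>* q t'" using z0(1) by (rule rtranclp_trans[rotated])
    then show ?case using d by blast
  qed
qed

lemma RR_partner:
  assumes "RR lts tau x y s t" shows "\<exists>z. tau_star lts tau t z \<and> DD lts tau x y s z"
proof -
  have r: "tau_star lts tau t t" by (simp add: tau_star_def)
  show ?thesis
  using assms unfolding RR_def
  proof (elim disjE)
    assume "DD lts tau x y s t" then show ?thesis using r by blast
  next
    assume "G2 lts tau x y s t"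
    then obtain u v where "tau_star lts tau u s" "DD lts tau x y u t" unfolding G2_def by blast
    then show ?thesis by (rule transfer)
  next
    assume "G2 lts tau x y t s"
    then obtain u v where "tau_star lts tau t v" "DD lts tau x y v s" unfolding G2_def by blast
    then show ?thesis using DD_sym[of lts tau x y v s] by blast
  qed
qed

lemma DD_RR: "DD lts tau x y a b \<Longrightarrow> RR lts tau x y a b" by (simp add: RR_def)

lemma semi_RR: "semi lts tau x y (RR lts tau x y)"
proof (rule semiI)
  fix s t assume "RR lts tau x y s t"
  then show "RR lts tau x y t s" unfolding RR_def using DD_sym[of lts tau x y s t] by blast
next
  fix s t a s' assume h: "RR lts tau x y s t" and l: "lts s a s'"
  obtain z where z: "tau_star lts tau t z" "DD lts tau x y s z" using RR_partner[OF h] by blast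
  have "mtch lts tau x y (DD lts tau x y) s z a s'" by (rule semi_moves[OF semi_DD z(2) l])
  then show "mtch lts tau x y (RR lts tau x y) s t a s'"
    by (rule mtch_prefix[of lts tau x y "DD lts tau x y" s z a s' t "RR lts tau x y", OF _ z(1) h DD_RR])
next
  fix s t and f :: "nat \<Rightarrow> _" assume h: "RR lts tau x y s t" and f: "f 0 = s" "\<forall>i. lts (f i) tau (f (Suc i))"
  obtain z where z: "tau_star lts tau t z" "DD lts tau x y s z" using RR_partner[OF h] by blast
  obtain t' k where tk: "tau_plus lts tau z t'" "DD lts tau x y (f k) t'" using semi_div[OF semi_DD z(2) f] by blast
  have "tau_plus lts tau t t'" using z(1) tk(1) unfolding tau_star_def tau_plus_def
    by (rule rtranclp_tranclp_tranclp)
  then show "\<exists>t' k. tau_plus lts tau t t' \<and> RR lts tau x y (f k) t'" using DD_RR[OF tk(2)] by blast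
qed

lemma G2_DD: "G2 lts tau x y s t \<Longrightarrow> DD lts tau x y s t"
  by (rule DD_I[OF semi_RR]) (simp add: RR_def)

lemma DD_bisim: "generic_bisim_ed lts tau x y (DD lts tau x y)"
  unfolding generic_bisim_ed_def generic_bisim_def
proof (intro conjI allI impI)
  show "symp (DD lts tau x y)" by (rule sympI) (rule DD_sym)
next
  fix s t f assume "DD lts tau x y s t" "f 0 = s \<and> (\<forall>i. lts (f i) tau (f (Suc i)))"
  then show "\<exists>t' k. tau_plus lts tau t t' \<and> DD lts tau x y (f k) t'"
    using semi_div[of lts tau x y "DD lts tau x y" s t f, OF semi_DD] by blast
next
  fix s t a s' assume h: "DD lts tau x y s t \<and> lts s a s'"
  have "mtch lts tau x y (DD lts tau x y) s t a s'" using h semi_moves[of lts tau x y "DD lts tau x y" s t a s', OF semi_DD] by blast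
  then show "(a = tau \<and> DD lts tau x y s' t) \<or>
        (\<exists>t' t1 t2. mode_star lts tau x (DD lts tau x y) s t t1 \<and> lts t1 a t2 \<and>
                    mode_star lts tau y (DD lts tau x y) s' t2 t' \<and> DD lts tau x y s' t')"
    unfolding mtch_def
  proof (elim disjE exE conjE)
    fix t' assume a: "a = tau" and ms: "mode_star lts tau x (DD lts tau x y) s t t'"
      and d: "DD lts tau x y s' t'"
    have ts: "(tau_step lts tau)\<^sup>*\<^sup>* t t'" using mode_star_tau[OF ms] by (simp add: tau_star_def)
    then show ?thesis
    proof (cases rule: rtranclp.cases)
      case rtrancl_refl then show ?thesis using a d by blast
    next
      case (rtrancl_into_rtrancl t0)
      have m1: "mode_star lts tau x (DD lts tau x y) s t t0"
      proof (cases x)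
        case Mo then show ?thesis using rtrancl_into_rtrancl by (simp add: mode_star_def tau_star_def)
      next
        case Mb
        then have d1: "DD lts tau x y s t" "DD lts tau x y s t'" using ms by (auto simp: mode_star_def)
        have "tau_star lts tau t t0" "tau_star lts tau t0 t'" using rtrancl_into_rtrancl
          by (auto simp: tau_star_def)
        then have "G2 lts tau x y t0 s" unfolding G2_def
          using DD_sym[OF d1(1)] DD_sym[OF d1(2)] by blast
        then have "DD lts tau x y s t0" by (rule DD_sym[OF G2_DD])
        then show ?thesis using Mb rtrancl_into_rtrancl d1
          by (simp add: mode_star_def tau_star_def)
      qed
      have m2: "mode_star lts tau y (DD lts tau x y) s' t' t'"
        using d by (cases y) (auto simp: mode_star_def tau_star_def)
      have "lts t0 a t'" using rtrancl_into_rtrancl a by (simp add: tau_step_def)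
      then show ?thesis using m1 m2 d by (intro disjI2 exI conjI)
    qed
  next
    fix t' t1 t2 assume "mode_star lts tau x (DD lts tau x y) s t t1" "lts t1 a t2"
      "mode_star lts tau y (DD lts tau x y) s' t2 t'" "DD lts tau x y s' t'"
    then show ?thesis by blast
  qed
qed

lemma path_star:
  assumes "\<forall>i<k. lts (t i) tau (t (Suc i))"
  shows "m \<le> n \<Longrightarrow> n \<le> k \<Longrightarrow> tau_star lts tau (t m) (t n)"
proof (induction n)
  case 0 then show ?case by (simp add: tau_star_def)
next
  case (Suc n)
  show ?case
  proof (cases "m = Suc n")
    case True then show ?thesis by (simp add: tau_star_def)
  next
    case False
    then have "tau_star lts tau (t m) (t n)" using Suc by simp
    moreover have "lts (t n) tau (t (Suc n))" using assms Suc by simp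
    ultimately show ?thesis unfolding tau_star_def
      by (metis rtranclp.rtrancl_into_rtrancl tau_step_def)
  qed
qed

lemma bisim_semi:
  assumes g: "generic_bisim_ed lts tau x y R"
  shows "semi lts tau x y R"
proof (rule semiI)
  fix s t assume "R s t"
  moreover have "symp R" using g unfolding generic_bisim_ed_def generic_bisim_def by simp
  ultimately show "R t s" by (rule sympD[rotated])
next
  fix s t and f :: "nat \<Rightarrow> _" assume h: "R s t" "f 0 = s" "\<forall>i. lts (f i) tau (f (Suc i))"
  have "\<forall>s t. R s t \<longrightarrow>
        (\<forall>f :: nat \<Rightarrow> _. f 0 = s \<and> (\<forall>i. lts (f i) tau (f (Suc i))) \<longrightarrow>
           (\<exists>t' k. tau_plus lts tau t t' \<and> R (f k) t'))" using g unfolding generic_bisim_ed_def by simp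
  then show "\<exists>t' k. tau_plus lts tau t t' \<and> R (f k) t'" using h by simp
next
  fix s t a s' assume h: "R s t" "lts s a s'"
  have m: "mode_star lts tau x R s t t"
    using h by (cases x) (auto simp: mode_star_def tau_star_def)
  have "\<forall>s t a s'. R s t \<and> lts s a s' \<longrightarrow> (a = tau \<and> R s' t) \<or>
        (\<exists>t' t1 t2. mode_star lts tau x R s t t1 \<and> lts t1 a t2 \<and>
                    mode_star lts tau y R s' t2 t' \<and> R s' t')"
    using g unfolding generic_bisim_ed_def generic_bisim_def by simp
  then have "(a = tau \<and> R s' t) \<or>
        (\<exists>t' t1 t2. mode_star lts tau x R s t t1 \<and> lts t1 a t2 \<and>
                    mode_star lts tau y R s' t2 t' \<and> R s' t')" using h by simp
  then show "mtch lts tau x y R s t a s'"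
  proof (elim disjE conjE)
    assume "a = tau" "R s' t"
    then show ?thesis unfolding mtch_def using m by (intro disjI1 conjI exI[of _ t])
  next
    assume "\<exists>t' t1 t2. mode_star lts tau x R s t t1 \<and> lts t1 a t2 \<and>
                    mode_star lts tau y R s' t2 t' \<and> R s' t'"
    then show ?thesis unfolding mtch_def by (rule disjI2)
  qed
qed

theorem lemma6p3:
  fixes lts :: "'s \<Rightarrow> 'a \<Rightarrow> 's \<Rightarrow> bool" and tau :: 'a
    and x y :: mode and t :: "nat \<Rightarrow> 's" and k :: nat
  assumes "\<forall>i<k. lts (t i) tau (t (Suc i))"
    and "bisimilar_ed lts tau x y (t 0) (t k)"
  shows "\<forall>i\<le>k. \<forall>j\<le>k. bisimilar_ed lts tau x y (t i) (t j)"
proof (intro allI impI)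
  fix i j assume ij: "i \<le> k" "j \<le> k"
  have d0: "DD lts tau x y (t 0) (t k)"
  proof -
    obtain R where R: "generic_bisim_ed lts tau x y R" "R (t 0) (t k)"
      using assms(2) unfolding bisimilar_ed_def by blast
    show ?thesis by (rule DD_I[OF bisim_semi[OF R(1)] R(2)])
  qed
  have st: "tau_star lts tau (t 0) (t m) \<and> tau_star lts tau (t m) (t k)" if "m \<le> k" for m
    using path_star[where k=k and lts=lts and t=t and tau=tau and m=0 and n=m]
      path_star[where k=k and lts=lts and t=t and tau=tau and m=m and n=k] assms(1) that by simp
  have a: "DD lts tau x y (t m) (t 0)" if "m \<le> k" for m
  proof -
    have "G2 lts tau x y (t m) (t 0)" unfolding G2_def
      by (rule exI[of _ "t 0"], rule exI[of _ "t k"]) (use st[OF that] DD_refl[of lts tau x y "t 0"] DD_sym[OF d0] in simp)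
    then show ?thesis by (rule G2_DD)
  qed
  have b: "DD lts tau x y (t m) (t k)" if "m \<le> k" for m
  proof -
    have "G2 lts tau x y (t m) (t k)" unfolding G2_def
      by (rule exI[of _ "t 0"], rule exI[of _ "t k"]) (use st[OF that] DD_refl[of lts tau x y "t k"] d0 in simp)
    then show ?thesis by (rule G2_DD)
  qed
  have "G2 lts tau x y (t i) (t j)" unfolding G2_def
    by (rule exI[of _ "t 0"], rule exI[of _ "t k"]) (use st[OF ij(1)] DD_sym[OF a[OF ij(2)]] DD_sym[OF b[OF ij(2)]] in simp)
  then have dij: "DD lts tau x y (t i) (t j)" by (rule G2_DD)
  show "bisimilar_ed lts tau x y (t i) (t j)"
    unfolding bisimilar_ed_def by (rule exI[of _ "DD lts tau x y"], rule conjI[OF DD_bisim dij])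
qed

end
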